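(* Let $G=(V,E)$ be an event graph. Then $\mathrm{dec}(G)$ has exactly one sink component; in particular, the sink component $\mathcal C$ that is the only sink component reachable from every node $(v,\emptyset)$, $v\in V$, is the only sink component of $\mathrm{dec}(G)$, and it is reachable from every node of $\mathrm{dec}(G)$.
   Context: An event graph is a finite, connected, undirected graph $G=(V,E)$, with $n=|V|$, in which every node $v$ carries a label that is either $\mathtt{i}x_v$ (insertion of $x_v$) or $\mathtt{d}x_v$ (deletion of $x_v$), where $x_v$ is an element of a finite universe $\mathcal U$. Write $\mathcal U_{|V}=\{x_v : v\in V\}$. It is assumed that for each $x\in\mathcal U_{|V}$ at least one node is labeled $\mathtt{i}x$ and at least one node is labeled $\mathtt{d}x$. The decorated graph $\mathrm{dec}(G)$ is the directed graph with vertex set $V\times 2^{\mathcal U_{|V}}$ in which $((u,X),(v,Y))$ is an edge if and only if $\{u,v\}\in E$ and $Y=X\cup\{x_v\}$ when $v$ is labeled $\mathtt{i}x_v$, respectively $Y=X\setminus\{x_v\}$ when $v$ is labeled $\mathtt{d}x_v$. A sink component of $\mathrm{dec}(G)$ is a strongly connected component of $\mathrm{dec}(G)$ from which no edge leads to a different strongly connected component. *)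

theory Defs
  imports Main
begin

text \<open>An event graph: vertex set V, undirected edges E (2-element subsets of V),
  each node v labelled insertion (ins v = True) or deletion (ins v = False) of x v,
  an element of the finite universe U.\<close>

definition graph_rel :: "'v set set \<Rightarrow> ('v \<times> 'v) set" where
  "graph_rel E = {(a, b). {a, b} \<in> E}"

definition event_graph ::
  "'v set \<Rightarrow> 'v set set \<Rightarrow> ('v \<Rightarrow> bool) \<Rightarrow> ('v \<Rightarrow> 'u) \<Rightarrow> 'u set \<Rightarrow> bool" where
  "event_graph V E ins x U \<longleftrightarrow>
     finite V \<and> V \<noteq> {} \<and> finite U \<and>
     (\<forall>e\<in>E. e \<subseteq> V \<and> card e = 2) \<and>
     (\<forall>u\<in>V. \<forall>v\<in>V. (u, v) \<in> (graph_rel E)\<^sup>*) \<and>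
     x ` V \<subseteq> U \<and>
     (\<forall>a\<in>x ` V. (\<exists>v\<in>V. ins v \<and> x v = a) \<and> (\<exists>v\<in>V. \<not> ins v \<and> x v = a))"

definition dec_nodes :: "'v set \<Rightarrow> ('v \<Rightarrow> 'u) \<Rightarrow> ('v \<times> 'u set) set" where
  "dec_nodes V x = V \<times> Pow (x ` V)"

definition upd :: "('v \<Rightarrow> bool) \<Rightarrow> ('v \<Rightarrow> 'u) \<Rightarrow> 'v \<Rightarrow> 'u set \<Rightarrow> 'u set" where
  "upd ins x v X = (if ins v then insert (x v) X else X - {x v})"

definition dec_edges ::
  "'v set \<Rightarrow> 'v set set \<Rightarrow> ('v \<Rightarrow> bool) \<Rightarrow> ('v \<Rightarrow> 'u) \<Rightarrow> (('v \<times> 'u set) \<times> ('v \<times> 'u set)) set" where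
  "dec_edges V E ins x =
     {((u, X), (v, Y)). (u, X) \<in> dec_nodes V x \<and> (v, Y) \<in> dec_nodes V x \<and>
        {u, v} \<in> E \<and> Y = upd ins x v X}"

definition scc :: "'a set \<Rightarrow> ('a \<times> 'a) set \<Rightarrow> 'a set \<Rightarrow> bool" where
  "scc N R C \<longleftrightarrow> (\<exists>a\<in>N. C = {b\<in>N. (a, b) \<in> R\<^sup>* \<and> (b, a) \<in> R\<^sup>*})"

definition sink_component :: "'a set \<Rightarrow> ('a \<times> 'a) set \<Rightarrow> 'a set \<Rightarrow> bool" where
  "sink_component N R C \<longleftrightarrow> scc N R C \<and> (\<forall>a\<in>C. \<forall>b. (a, b) \<in> R \<longrightarrow> b \<in> C)"

end

theory Submission
  imports Defs
begin

lemma sink_generic: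
  assumes RN: "R \<subseteq> N \<times> N" and c0: "c0 \<in> N" and all: "\<forall>w\<in>N. (w, c0) \<in> R\<^sup>*"
  shows "\<exists>C. sink_component N R C \<and> (\<forall>C'. sink_component N R C' \<longrightarrow> C' = C)
           \<and> (\<forall>w\<in>N. \<exists>c\<in>C. (w, c) \<in> R\<^sup>*)"
proof -
  define C where "C = {b\<in>N. (c0, b) \<in> R\<^sup>* \<and> (b, c0) \<in> R\<^sup>*}"
  have s1: "sink_component N R C"
    unfolding sink_component_def scc_def
  proof (intro conjI)
    show "\<exists>a\<in>N. C = {b \<in> N. (a, b) \<in> R\<^sup>* \<and> (b, a) \<in> R\<^sup>*}" using c0 C_def by blast
    show "\<forall>a\<in>C. \<forall>b. (a, b) \<in> R \<longrightarrow> b \<in> C"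
    proof (intro ballI allI impI)
      fix a b assume a: "a \<in> C" and ab: "(a,b) \<in> R"
      hence bN: "b \<in> N" using RN by blast
      have "(c0, b) \<in> R\<^sup>*" proof -
        have "(c0, a) \<in> R\<^sup>*" using a C_def by blast
        thus ?thesis using ab by (rule rtrancl.rtrancl_into_rtrancl)
      qed
      thus "b \<in> C" using bN all C_def by blast
    qed
  qed
  have s2: "\<forall>C'. sink_component N R C' \<longrightarrow> C' = C"
  proof (intro allI impI)
    fix C' assume sc: "sink_component N R C'"
    then obtain a where aN: "a \<in> N" and C'd: "C' = {b\<in>N. (a, b) \<in> R\<^sup>* \<and> (b, a) \<in> R\<^sup>*}"
      and cl: "\<forall>a\<in>C'. \<forall>b. (a, b) \<in> R \<longrightarrow> b \<in> C'"
      unfolding sink_component_def scc_def by blast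
    have aC': "a \<in> C'" using aN C'd by blast
    have reach: "\<And>b. (a, b) \<in> R\<^sup>* \<Longrightarrow> b \<in> C'"
    proof -
      fix b assume "(a,b) \<in> R\<^sup>*"
      then show "b \<in> C'"
      proof (induction rule: rtrancl_induct)
        case base show ?case by (rule aC')
      next
        case (step y z) thus ?case using cl by blast
      qed
    qed
    have "c0 \<in> C'" using reach all aN by blast
    hence ac: "(a, c0) \<in> R\<^sup>*" "(c0, a) \<in> R\<^sup>*" using C'd by auto
    show "C' = C" unfolding C'd C_def using ac rtrancl_trans[of a c0 R] rtrancl_trans[of c0 a R]
      by (auto intro: rtrancl_trans)
  qed
  have s3: "\<forall>w\<in>N. \<exists>c\<in>C. (w, c) \<in> R\<^sup>*" using all c0 C_def by blast
  show ?thesis using s1 s2 s3 by blast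
qed

fun walk :: "'v set set \<Rightarrow> 'v \<Rightarrow> 'v list \<Rightarrow> bool" where
  "walk E u [] = True"
| "walk E u (w # ws) = ({u, w} \<in> E \<and> walk E w ws)"

fun run :: "('v \<Rightarrow> bool) \<Rightarrow> ('v \<Rightarrow> 'u) \<Rightarrow> 'u set \<Rightarrow> 'v list \<Rightarrow> 'u set" where
  "run ins x X [] = X"
| "run ins x X (w # ws) = run ins x (upd ins x w X) ws"

lemma walk_append: "walk E u (ws @ vs) = (walk E u ws \<and> walk E (last (u # ws)) vs)"
  by (induction ws arbitrary: u) auto

lemma run_notin: "a \<notin> x ` set ws \<Longrightarrow> (a \<in> run ins x Z ws) = (a \<in> Z)"
  by (induction ws arbitrary: Z) (auto simp: upd_def)

lemma run_indep: "a \<in> x ` set ws \<Longrightarrow> (a \<in> run ins x X ws) = (a \<in> run ins x Y ws)"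
proof (induction ws arbitrary: X Y)
  case Nil then show ?case by simp
next
  case (Cons w ws)
  show ?case
  proof (cases "a \<in> x ` set ws")
    case True then show ?thesis using Cons.IH by simp
  next
    case False
    then have "a = x w" using Cons.prems by simp
    then show ?thesis using False by (simp add: run_notin upd_def)
  qed
qed

lemma walk_set: "\<forall>e\<in>E. e \<subseteq> V \<Longrightarrow> walk E u ws \<Longrightarrow> set ws \<subseteq> V"
  by (induction ws arbitrary: u) auto

lemma run_sub: "set ws \<subseteq> V \<Longrightarrow> X \<subseteq> x ` V \<Longrightarrow> run ins x X ws \<subseteq> x ` V"
proof (induction ws arbitrary: X)
  case Nil then show ?case by simp
next
  case (Cons w ws)
  have "upd ins x w X \<subseteq> x ` V" using Cons.prems by (auto simp: upd_def)
  then show ?case using Cons by simp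
qed

lemma lift:
  assumes EV: "\<forall>e\<in>E. e \<subseteq> V"
  shows "walk E u ws \<Longrightarrow> u \<in> V \<Longrightarrow> X \<subseteq> x ` V \<Longrightarrow>
    ((u, X), (last (u # ws), run ins x X ws)) \<in> (dec_edges V E ins x)\<^sup>*"
proof (induction ws arbitrary: u X)
  case Nil then show ?case by simp
next
  case (Cons w ws)
  have e: "{u, w} \<in> E" "walk E w ws" using Cons.prems by auto
  have wV: "w \<in> V" using e EV by blast
  have X': "upd ins x w X \<subseteq> x ` V" using Cons.prems wV by (auto simp: upd_def)
  have "((u, X), (w, upd ins x w X)) \<in> dec_edges V E ins x"
    using e Cons.prems wV X' by (simp add: dec_edges_def dec_nodes_def)
  moreover have "((w, upd ins x w X), (last (w # ws), run ins x (upd ins x w X) ws)) \<in> (dec_edges V E ins x)\<^sup>*"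
    using Cons.IH e wV X' by blast
  ultimately show ?case by simp
qed

lemma path_walk:
  assumes "(u, v) \<in> (graph_rel E)\<^sup>*"
  shows "\<exists>ws. walk E u ws \<and> last (u # ws) = v"
  using assms
proof (induction rule: rtrancl_induct)
  case base then show ?case by (intro exI[of _ "[]"]) simp
next
  case (step y z)
  then obtain ws where "walk E u ws" "last (u # ws) = y" by blast
  then show ?case using step(2)
    by (intro exI[of _ "ws @ [z]"]) (simp add: walk_append graph_rel_def)
qed

theorem mainTheorem4:
  fixes V :: "'v set" and E :: "'v set set" and ins :: "'v \<Rightarrow> bool"
    and x :: "'v \<Rightarrow> 'u" and U :: "'u set"
  assumes "event_graph V E ins x U"
  shows "\<exists>C. sink_component (dec_nodes V x) (dec_edges V E ins x) C
           \<and> (\<forall>C'. sink_component (dec_nodes V x) (dec_edges V E ins x) C' \<longrightarrow> C' = C)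
           \<and> (\<forall>w\<in>dec_nodes V x. \<exists>c\<in>C. (w, c) \<in> (dec_edges V E ins x)\<^sup>*)"
proof -
  note eg = assms[unfolded event_graph_def]
  have fin: "finite V" and ne: "V \<noteq> {}" and EV: "\<forall>e\<in>E. e \<subseteq> V"
    and conn: "\<forall>u\<in>V. \<forall>v\<in>V. (u, v) \<in> (graph_rel E)\<^sup>*"
    and lab: "\<forall>a\<in>x ` V. (\<exists>v\<in>V. ins v \<and> x v = a) \<and> (\<exists>v\<in>V. \<not> ins v \<and> x v = a)"
    using eg by (blast, blast, blast, blast, blast)
  obtain r where r: "r \<in> V" using ne by blast
  have cover: "A \<subseteq> x ` V \<Longrightarrow> \<exists>ws. walk E r ws \<and> last (r # ws) = r \<and> A \<subseteq> x ` set ws" for A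
  proof -
    assume AV: "A \<subseteq> x ` V"
    have "finite A" using AV fin finite_surj by blast
    then show ?thesis using AV
    proof (induction A rule: finite_induct)
      case empty then show ?case by (intro exI[of _ "[]"]) simp
    next
      case (insert a A)
      then obtain ws where ws: "walk E r ws" "last (r # ws) = r" "A \<subseteq> x ` set ws" by auto
      have "a \<in> x ` V" using insert by auto
      then obtain v1 v2 where v: "v1 \<in> V" "v2 \<in> V" "ins v1" "\<not> ins v2" "x v1 = a" "x v2 = a"
        using lab by blast
      have "v1 \<noteq> v2" using v by blast
      then obtain t where t: "t \<in> V" "t \<noteq> r" "x t = a"
        using v by metis
      have p1: "(r, t) \<in> (graph_rel E)\<^sup>*" using conn r t(1) by blast
      have p2: "(t, r) \<in> (graph_rel E)\<^sup>*" using conn r t(1) by blast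
      obtain ws1 where ws1: "walk E r ws1" "last (r # ws1) = t"
        using path_walk[OF p1] by blast
      obtain ws2 where ws2: "walk E t ws2" "last (t # ws2) = r"
        using path_walk[OF p2] by blast
      have "ws1 \<noteq> []" using ws1 t by auto
      hence tin: "t \<in> set ws1" using ws1 by (metis last_ConsR last_in_set)
      have "ws2 \<noteq> []" using ws2 t by auto
      hence l2: "last ws2 = r" using ws2 by simp
      show ?case
      proof (intro exI[of _ "ws @ ws1 @ ws2"] conjI)
        show "walk E r (ws @ ws1 @ ws2)" using ws ws1 ws2 by (simp add: walk_append)
        show "last (r # ws @ ws1 @ ws2) = r" using l2 \<open>ws2 \<noteq> []\<close> by simp
        show "insert a A \<subseteq> x ` set (ws @ ws1 @ ws2)" using ws(3) tin t(3) by auto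
      qed
    qed
  qed
  obtain W where W: "walk E r W" "last (r # W) = r" "x ` V \<subseteq> x ` set W"
    using cover[OF order_refl] by blast
  have WV: "set W \<subseteq> V" using walk_set[OF EV W(1)] .
  define S where "S = run ins x {} W"
  have runeq: "X \<subseteq> x ` V \<Longrightarrow> run ins x X W = S" for X
  proof -
    assume X: "X \<subseteq> x ` V"
    have s1: "run ins x X W \<subseteq> x ` V" using run_sub[OF WV X] .
    have s2: "S \<subseteq> x ` V" unfolding S_def by (rule run_sub[OF WV]) simp
    show ?thesis
    proof (rule set_eqI)
      fix a show "(a \<in> run ins x X W) = (a \<in> S)"
      proof (cases "a \<in> x ` V")
        case True then have "a \<in> x ` set W" using W(3) by blast
        then show ?thesis unfolding S_def by (rule run_indep)
      next
        case False then show ?thesis using s1 s2 by blast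
      qed
    qed
  qed
  have RN: "dec_edges V E ins x \<subseteq> dec_nodes V x \<times> dec_nodes V x"
    unfolding dec_edges_def by auto
  have c0: "(r, S) \<in> dec_nodes V x"
  proof -
    have "S \<subseteq> x ` V" unfolding S_def by (rule run_sub[OF WV]) simp
    thus ?thesis using r by (simp add: dec_nodes_def)
  qed
  have all: "\<forall>w\<in>dec_nodes V x. (w, (r, S)) \<in> (dec_edges V E ins x)\<^sup>*"
  proof
    fix w assume "w \<in> dec_nodes V x"
    then obtain u X where w: "w = (u, X)" "u \<in> V" "X \<subseteq> x ` V" by (auto simp: dec_nodes_def)
    obtain ws where ws: "walk E u ws" "last (u # ws) = r" using path_walk[of u r E] conn r w(2) by meson
    have 1: "((u, X), (r, run ins x X ws)) \<in> (dec_edges V E ins x)\<^sup>*"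
      using lift[where ins=ins, OF EV ws(1) w(2) w(3)] ws(2) by simp
    have X1: "run ins x X ws \<subseteq> x ` V" using run_sub[OF walk_set[OF EV ws(1)] w(3)] .
    have 2: "((r, run ins x X ws), (r, S)) \<in> (dec_edges V E ins x)\<^sup>*"
      using lift[where ins=ins, OF EV W(1) r X1] W(2) runeq[OF X1] by simp
    show "(w, (r, S)) \<in> (dec_edges V E ins x)\<^sup>*" using 1 2 w by simp
  qed
  show ?thesis using sink_generic[OF RN c0 all] .
qed

end
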